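(* Consider the fully discrete explicit splitting scheme described in the context, with mirrored boundary layers and initialisation $\boldsymbol{u}^0=\boldsymbol{f}$, and let the time step size satisfy $\tau\le\min\{\tau_1,\tau_2,\tau_3,\tau_4\}$ where $$\tau_1=\frac{h^2}{4(1-\nu)|p-1|},\quad \tau_2=\frac{h^2}{2\nu|p-1|},\quad \tau_3=\frac{h^2}{2\sqrt2(1-\nu)|2-p|},\quad \tau_4=\frac{h^2}{2\nu|2-p|}$$ (a quotient with vanishing denominator is read as $+\infty$). Then the scheme is $L^\infty$-stable, $\|\boldsymbol{u}^k\|_\infty\le\|\boldsymbol{u}^{k-1}\|_\infty$ for all $k\ge1$, and satisfies the discrete maximum–minimum principle $\min_{i,j}f_{i,j}\le u^k_{n,m}\le\max_{i,j}f_{i,j}$ for all grid indices $n,m$ and all $k\ge1$.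
   Context: The scheme discretises $u_t=(2-p)\,\mathrm{curv}(u)|\nabla u|+(p-1)\Delta u$ (for $p\ge1$) resp. $u_t=(2-p)\,\mathrm{curv}(u)|\nabla u|+(p-1)\operatorname{sgn}(|\nabla u|)\Delta u$ (for $p<1$), with $p\in\mathbb{R}$, on a rectangular grid of spacing $h$ with values $u_{i,j}$, given image $\boldsymbol{f}$, and weight $\nu\in(0,1)$ (the paper uses $\nu=\sqrt2-1$). Values outside the grid are defined by mirroring one or two layers of boundary pixels (homogeneous Neumann boundary conditions). Forward differences: $u^x_{i,j}=(u_{i+1,j}-u_{i,j})/h$, $u^y_{i,j}=(u_{i,j+1}-u_{i,j})/h$, $u^d_{i,j}=(u_{i+1,j+1}-u_{i,j})/(\sqrt2h)$, $u^e_{i,j}=(u_{i+1,j-1}-u_{i,j})/(\sqrt2h)$. Minmod: $\mathrm{M}(a,b,c)$ is the argument of minimal modulus if $ab\ge0$ and $ac\ge0$, and $0$ otherwise. Diffusion operators: for $p\ge1$, $\boldsymbol{D}_+(\boldsymbol u)_{i,j}=(p-1)(u_{i+1,j}+u_{i-1,j}+u_{i,j+1}+u_{i,j-1}-4u_{i,j})/h^2$ and $\boldsymbol{D}_\times(\boldsymbol u)_{i,j}=(p-1)(u_{i+1,j+1}+u_{i-1,j-1}+u_{i+1,j-1}+u_{i-1,j+1}-4u_{i,j})/(2h^2)$. For $p<1$, $\boldsymbol{D}_+(\boldsymbol u)_{i,j}=\frac{p-1}{h}\bigl(\mathrm{M}(u^x_{i+1,j},u^x_{i,j},u^x_{i-1,j})-\mathrm{M}(u^x_{i,j},u^x_{i-1,j},u^x_{i-2,j})+\mathrm{M}(u^y_{i,j+1},u^y_{i,j},u^y_{i,j-1})-\mathrm{M}(u^y_{i,j},u^y_{i,j-1},u^y_{i,j-2})\bigr)$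 and $\boldsymbol{D}_\times(\boldsymbol u)_{i,j}=\frac{p-1}{\sqrt2h}\bigl(\mathrm{M}(u^d_{i+1,j+1},u^d_{i,j},u^d_{i-1,j-1})-\mathrm{M}(u^d_{i,j},u^d_{i-1,j-1},u^d_{i-2,j-2})+\mathrm{M}(u^e_{i+1,j-1},u^e_{i,j},u^e_{i-1,j+1})-\mathrm{M}(u^e_{i,j},u^e_{i-1,j+1},u^e_{i-2,j+2})\bigr)$. Curvature: $c_{i,j}$ is the isophote curvature $(u_x^2u_{yy}-2u_xu_yu_{xy}+u_y^2u_{xx})/(u_x^2+u_y^2+\epsilon)^{3/2}$, $\epsilon=10^{-10}$, with derivatives approximated by central differences, then clipped to $[-2/h,2/h]$. Curvature operators: $\boldsymbol{M}_+(\boldsymbol u)_{i,j}=(2-p)c_{i,j}\,G^+_{i,j}$, $\boldsymbol{M}_\times(\boldsymbol u)_{i,j}=(2-p)c_{i,j}\,G^\times_{i,j}$, where (Rouy–Tourin upwinding) if $(2-p)c_{i,j}\ge0$ (dilation case) $G^+_{i,j}=\bigl(\max(-u^x_{i-1,j},u^x_{i,j},0)^2+\max(-u^y_{i,j-1},u^y_{i,j},0)^2\bigr)^{1/2}$ and $G^\times_{i,j}=\bigl(\max(-u^d_{i-1,j-1},u^d_{i,j},0)^2+\max(-u^e_{i-1,j+1},u^e_{i,j},0)^2\bigr)^{1/2}$, and otherwise (erosion case) $G^+_{i,j}=\bigl(\max(-u^x_{i,j},u^x_{i-1,j},0)^2+\max(-u^y_{i,j},u^y_{i,j-1},0)^2\bigr)^{1/2}$,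 $G^\times_{i,j}=\bigl(\max(-u^d_{i,j},u^d_{i-1,j-1},0)^2+\max(-u^e_{i,j},u^e_{i-1,j+1},0)^2\bigr)^{1/2}$. Scheme: $\boldsymbol u^{k+1/4}=\boldsymbol u^k+\tau(1-\nu)\boldsymbol D_+(\boldsymbol u^k)$, $\boldsymbol u^{k+1/2}=\boldsymbol u^{k+1/4}+\tau\nu\boldsymbol D_\times(\boldsymbol u^{k+1/4})$, $\boldsymbol u^{k+3/4}=\boldsymbol u^{k+1/2}+\tau(1-\nu)\boldsymbol M_+(\boldsymbol u^{k+1/2})$, $\boldsymbol u^{k+1}=\boldsymbol u^{k+3/4}+\tau\nu\boldsymbol M_\times(\boldsymbol u^{k+3/4})$. *)

theory Defs
  imports Complex_Main
begin

(* Grid functions are maps int => int => real; the image lives on the grid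
   {0..<Nx} x {0..<Ny}.  Values outside are obtained by mirroring
   (homogeneous Neumann boundary conditions, symmetric extension). *)

definition grid :: "nat \<Rightarrow> nat \<Rightarrow> (int \<times> int) set" where
  "grid Nx Ny = {0..<int Nx} \<times> {0..<int Ny}"

(* mirror an index into {0..<N}: -1 |-> 0, -2 |-> 1, N |-> N-1, N+1 |-> N-2 *)
definition refl_idx :: "nat \<Rightarrow> int \<Rightarrow> int" where
  "refl_idx N i = (let m = i mod (2 * int N) in if m < int N then m else 2 * int N - 1 - m)"

definition ext :: "nat \<Rightarrow> nat \<Rightarrow> (int \<Rightarrow> int \<Rightarrow> real) \<Rightarrow> int \<Rightarrow> int \<Rightarrow> real" where
  "ext Nx Ny u i j = u (refl_idx Nx i) (refl_idx Ny j)"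

definition minmod :: "real \<Rightarrow> real \<Rightarrow> real \<Rightarrow> real" where
  "minmod a b c = (if a * b \<ge> 0 \<and> a * c \<ge> 0 then
      (if \<bar>a\<bar> \<le> \<bar>b\<bar> \<and> \<bar>a\<bar> \<le> \<bar>c\<bar> then a else if \<bar>b\<bar> \<le> \<bar>c\<bar> then b else c)
    else 0)"

definition dx :: "real \<Rightarrow> (int \<Rightarrow> int \<Rightarrow> real) \<Rightarrow> int \<Rightarrow> int \<Rightarrow> real" where
  "dx h v i j = (v (i+1) j - v i j) / h"
definition dy :: "real \<Rightarrow> (int \<Rightarrow> int \<Rightarrow> real) \<Rightarrow> int \<Rightarrow> int \<Rightarrow> real" where
  "dy h v i j = (v i (j+1) - v i j) / h"
definition dd :: "real \<Rightarrow> (int \<Rightarrow> int \<Rightarrow> real) \<Rightarrow> int \<Rightarrow> int \<Rightarrow> real" where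
  "dd h v i j = (v (i+1) (j+1) - v i j) / (sqrt 2 * h)"
definition de :: "real \<Rightarrow> (int \<Rightarrow> int \<Rightarrow> real) \<Rightarrow> int \<Rightarrow> int \<Rightarrow> real" where
  "de h v i j = (v (i+1) (j-1) - v i j) / (sqrt 2 * h)"

definition Dplus :: "real \<Rightarrow> real \<Rightarrow> (int \<Rightarrow> int \<Rightarrow> real) \<Rightarrow> int \<Rightarrow> int \<Rightarrow> real" where
  "Dplus p h v i j = (if p \<ge> 1 then
      (p - 1) * (v (i+1) j + v (i-1) j + v i (j+1) + v i (j-1) - 4 * v i j) / h\<^sup>2
    else (p - 1) / h *
      (minmod (dx h v (i+1) j) (dx h v i j) (dx h v (i-1) j)
       - minmod (dx h v i j) (dx h v (i-1) j) (dx h v (i-2) j)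
       + minmod (dy h v i (j+1)) (dy h v i j) (dy h v i (j-1))
       - minmod (dy h v i j) (dy h v i (j-1)) (dy h v i (j-2))))"

definition Dtimes :: "real \<Rightarrow> real \<Rightarrow> (int \<Rightarrow> int \<Rightarrow> real) \<Rightarrow> int \<Rightarrow> int \<Rightarrow> real" where
  "Dtimes p h v i j = (if p \<ge> 1 then
      (p - 1) * (v (i+1) (j+1) + v (i-1) (j-1) + v (i+1) (j-1) + v (i-1) (j+1) - 4 * v i j) / (2 * h\<^sup>2)
    else (p - 1) / (sqrt 2 * h) *
      (minmod (dd h v (i+1) (j+1)) (dd h v i j) (dd h v (i-1) (j-1))
       - minmod (dd h v i j) (dd h v (i-1) (j-1)) (dd h v (i-2) (j-2))
       + minmod (de h v (i+1) (j-1)) (de h v i j) (de h v (i-1) (j+1))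
       - minmod (de h v i j) (de h v (i-1) (j+1)) (de h v (i-2) (j+2))))"

(* isophote curvature by central differences, eps = 10^-10, clipped to [-2/h, 2/h] *)
definition curv :: "real \<Rightarrow> (int \<Rightarrow> int \<Rightarrow> real) \<Rightarrow> int \<Rightarrow> int \<Rightarrow> real" where
  "curv h v i j = (let
      ux = (v (i+1) j - v (i-1) j) / (2 * h);
      uy = (v i (j+1) - v i (j-1)) / (2 * h);
      uxx = (v (i+1) j - 2 * v i j + v (i-1) j) / h\<^sup>2;
      uyy = (v i (j+1) - 2 * v i j + v i (j-1)) / h\<^sup>2;
      uxy = (v (i+1) (j+1) - v (i+1) (j-1) - v (i-1) (j+1) + v (i-1) (j-1)) / (4 * h\<^sup>2);
      c = (ux\<^sup>2 * uyy - 2 * ux * uy * uxy + uy\<^sup>2 * uxx) / (ux\<^sup>2 + uy\<^sup>2 + 1 / 10^10) powr (3/2)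
    in max (- 2 / h) (min (2 / h) c))"

definition Gplus :: "real \<Rightarrow> real \<Rightarrow> (int \<Rightarrow> int \<Rightarrow> real) \<Rightarrow> int \<Rightarrow> int \<Rightarrow> real" where
  "Gplus p h v i j = (if (2 - p) * curv h v i j \<ge> 0 then
      sqrt ((max (max (- dx h v (i-1) j) (dx h v i j)) 0)\<^sup>2 + (max (max (- dy h v i (j-1)) (dy h v i j)) 0)\<^sup>2)
    else
      sqrt ((max (max (- dx h v i j) (dx h v (i-1) j)) 0)\<^sup>2 + (max (max (- dy h v i j) (dy h v i (j-1))) 0)\<^sup>2))"

definition Gtimes :: "real \<Rightarrow> real \<Rightarrow> (int \<Rightarrow> int \<Rightarrow> real) \<Rightarrow> int \<Rightarrow> int \<Rightarrow> real" where
  "Gtimes p h v i j = (if (2 - p) * curv h v i j \<ge> 0 then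
      sqrt ((max (max (- dd h v (i-1) (j-1)) (dd h v i j)) 0)\<^sup>2 + (max (max (- de h v (i-1) (j+1)) (de h v i j)) 0)\<^sup>2)
    else
      sqrt ((max (max (- dd h v i j) (dd h v (i-1) (j-1))) 0)\<^sup>2 + (max (max (- de h v i j) (de h v (i-1) (j+1))) 0)\<^sup>2))"

definition Mplus :: "real \<Rightarrow> real \<Rightarrow> (int \<Rightarrow> int \<Rightarrow> real) \<Rightarrow> int \<Rightarrow> int \<Rightarrow> real" where
  "Mplus p h v i j = (2 - p) * curv h v i j * Gplus p h v i j"

definition Mtimes :: "real \<Rightarrow> real \<Rightarrow> (int \<Rightarrow> int \<Rightarrow> real) \<Rightarrow> int \<Rightarrow> int \<Rightarrow> real" where
  "Mtimes p h v i j = (2 - p) * curv h v i j * Gtimes p h v i j"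

definition substep :: "nat \<Rightarrow> nat \<Rightarrow> ((int \<Rightarrow> int \<Rightarrow> real) \<Rightarrow> int \<Rightarrow> int \<Rightarrow> real) \<Rightarrow> real
     \<Rightarrow> (int \<Rightarrow> int \<Rightarrow> real) \<Rightarrow> int \<Rightarrow> int \<Rightarrow> real" where
  "substep Nx Ny Op c u = (\<lambda>i j. ext Nx Ny u i j + c * Op (ext Nx Ny u) i j)"

definition scheme_step :: "nat \<Rightarrow> nat \<Rightarrow> real \<Rightarrow> real \<Rightarrow> real \<Rightarrow> real
     \<Rightarrow> (int \<Rightarrow> int \<Rightarrow> real) \<Rightarrow> int \<Rightarrow> int \<Rightarrow> real" where
  "scheme_step Nx Ny h p \<nu> \<tau> u =
     substep Nx Ny (Mtimes p h) (\<tau> * \<nu>)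
      (substep Nx Ny (Mplus p h) (\<tau> * (1 - \<nu>))
        (substep Nx Ny (Dtimes p h) (\<tau> * \<nu>)
          (substep Nx Ny (Dplus p h) (\<tau> * (1 - \<nu>)) u)))"

definition scheme :: "nat \<Rightarrow> nat \<Rightarrow> real \<Rightarrow> real \<Rightarrow> real \<Rightarrow> real
     \<Rightarrow> (int \<Rightarrow> int \<Rightarrow> real) \<Rightarrow> nat \<Rightarrow> int \<Rightarrow> int \<Rightarrow> real" where
  "scheme Nx Ny h p \<nu> \<tau> f k = (scheme_step Nx Ny h p \<nu> \<tau> ^^ k) f"

definition supnorm :: "nat \<Rightarrow> nat \<Rightarrow> (int \<Rightarrow> int \<Rightarrow> real) \<Rightarrow> real" where
  "supnorm Nx Ny u = Max ((\<lambda>(i, j). \<bar>u i j\<bar>) ` grid Nx Ny)"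

end

theory Submission
  imports Defs
begin

definition bnd :: "real \<Rightarrow> real \<Rightarrow> (int \<Rightarrow> int \<Rightarrow> real) \<Rightarrow> bool" where
  "bnd lo hi v = (\<forall>i j. lo \<le> v i j \<and> v i j \<le> hi)"

lemma bndD: "bnd lo hi v \<Longrightarrow> lo \<le> v i j \<and> v i j \<le> hi" by (simp add: bnd_def)

lemma conv:
  fixes lo hi x K m S :: real
  assumes "lo \<le> x" "x \<le> hi" "0 \<le> K" "0 \<le> m" "K * m \<le> 1"
    "S \<le> m * (hi - x)" "m * (lo - x) \<le> S"
  shows "lo \<le> x + K * S \<and> x + K * S \<le> hi"
proof -
  have "K * S \<le> K * (m * (hi - x))" using assms by (intro mult_left_mono) auto
  also have "\<dots> = (K * m) * (hi - x)" by simp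
  also have "\<dots> \<le> 1 * (hi - x)" using assms by (intro mult_right_mono) auto
  finally have 1: "K * S \<le> hi - x" by simp
  have "K * (m * (lo - x)) \<le> K * S" using assms by (intro mult_left_mono) auto
  moreover have "K * (m * (lo - x)) = (K * m) * (lo - x)" by simp
  moreover have "(K * m) * (lo - x) \<ge> 1 * (lo - x)"
    using assms by (intro mult_right_mono_neg) auto
  ultimately have 2: "lo - x \<le> K * S" by simp
  from 1 2 show ?thesis by simp
qed

lemma mm_bound:
  "min (min a0 (-am)) 0 \<le> minmod a0 am c - minmod b a0 am \<and>
   minmod a0 am c - minmod b a0 am \<le> max (max a0 (-am)) 0"
  unfolding minmod_def
  by (auto simp: abs_if zero_le_mult_iff mult_le_0_iff split: if_splits)

lemma sqrt_bound:
  fixes A C B :: real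
  assumes "0 \<le> A" "A \<le> B" "0 \<le> C" "C \<le> B"
  shows "sqrt (A\<^sup>2 + C\<^sup>2) \<le> sqrt 2 * B"
proof -
  have "A\<^sup>2 \<le> B\<^sup>2" "C\<^sup>2 \<le> B\<^sup>2" using assms by (auto intro: power_mono)
  then have "sqrt (A\<^sup>2 + C\<^sup>2) \<le> sqrt (2 * B\<^sup>2)" by (intro real_sqrt_le_mono) simp
  also have "\<dots> = sqrt 2 * B" using assms by (simp add: real_sqrt_mult)
  finally show ?thesis .
qed

lemma curv_bound: "h > 0 \<Longrightarrow> \<bar>curv h v i j\<bar> \<le> 2 / h"
  unfolding curv_def Let_def by (auto simp: abs_if)


lemma diff_le: "h > 0 \<Longrightarrow> bnd lo hi v \<Longrightarrow> (v a b - v i j) / h \<le> (hi - v i j) / h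
   \<and> (lo - v i j) / h \<le> (v a b - v i j) / h"
  by (auto dest!: bndD[of _ _ v a b] intro!: divide_right_mono)

lemma diff_le': "h > 0 \<Longrightarrow> bnd lo hi v \<Longrightarrow> (v i j - v a b) / h \<le> (v i j - lo) / h
   \<and> (v i j - hi) / h \<le> (v i j - v a b) / h"
  by (auto dest!: bndD[of _ _ v a b] intro!: divide_right_mono)

lemma X_bound:
  assumes "h > 0" "bnd lo hi v"
    and "a0 = (v a b - v i j) / h" and "am = (v i j - v a' b') / h"
  shows "minmod a0 am c - minmod bb a0 am \<le> (hi - v i j) / h \<and>
         (lo - v i j) / h \<le> minmod a0 am c - minmod bb a0 am"
proof -
  have 1: "(hi - v i j)/h \<ge> 0" "(lo - v i j)/h \<le> 0"
    using assms bndD[of lo hi v i j] by (auto simp: divide_simps)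
  have "-am = (v a' b' - v i j) / h" using assms(4) by (simp add: minus_divide_left)
  then have 2: "-am \<le> (hi - v i j)/h" "-am \<ge> (lo - v i j)/h"
    using diff_le[OF assms(1,2), of a' b' i j] by auto
  show ?thesis using mm_bound[of a0 am c bb] 1 2 diff_le[OF assms(1,2), of a b i j] assms(3)
    by linarith
qed


lemma Dplus_ok:
  assumes h: "h > 0" and bv: "bnd lo hi v" and c: "c \<ge> 0"
    and cond: "c * (4 * \<bar>p - 1\<bar>) \<le> h\<^sup>2"
  shows "lo \<le> v i j + c * Dplus p h v i j \<and> v i j + c * Dplus p h v i j \<le> hi"
proof (cases "p \<ge> 1")
  case True
  define S where "S = v (i+1) j + v (i-1) j + v i (j+1) + v i (j-1) - 4 * v i j"
  have eq: "c * Dplus p h v i j = (c * (p - 1) / h\<^sup>2) * S"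
    using True by (simp add: Dplus_def S_def)
  have "S \<le> 4 * (hi - v i j) \<and> 4 * (lo - v i j) \<le> S"
    using bndD[OF bv, of "i+1" j] bndD[OF bv, of "i-1" j] bndD[OF bv, of i "j+1"]
      bndD[OF bv, of i "j-1"] unfolding S_def by auto
  moreover have "(c * (p - 1) / h\<^sup>2) * 4 \<le> 1"
    using cond True h by (simp add: field_simps)
  moreover have "0 \<le> c * (p - 1) / h\<^sup>2" using True c by simp
  ultimately show ?thesis unfolding eq using conv[of lo "v i j" hi "c * (p - 1) / h\<^sup>2" 4 S]
    bndD[OF bv, of i j] by auto
next
  case False
  define X where "X = minmod (dx h v i j) (dx h v (i-1) j) (dx h v (i-2) j)
       - minmod (dx h v (i+1) j) (dx h v i j) (dx h v (i-1) j)"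
  define Y where "Y = minmod (dy h v i j) (dy h v i (j-1)) (dy h v i (j-2))
       - minmod (dy h v i (j+1)) (dy h v i j) (dy h v i (j-1))"
  have eq: "c * Dplus p h v i j = (c * (1 - p) / h) * (X + Y)"
    using False by (simp add: Dplus_def X_def Y_def field_simps)
  have bx: "X \<le> (hi - v i j) / h \<and> (lo - v i j) / h \<le> X"
    unfolding X_def by (rule X_bound[OF h bv, where a="i+1" and b=j and a'="i-1" and b'=j]) (simp_all add: dx_def)
  have by': "Y \<le> (hi - v i j) / h \<and> (lo - v i j) / h \<le> Y"
    unfolding Y_def by (rule X_bound[OF h bv, where a=i and b="j+1" and a'=i and b'="j-1"]) (simp_all add: dy_def)
  have "X + Y \<le> (2 / h) * (hi - v i j) \<and> (2 / h) * (lo - v i j) \<le> X + Y"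
  proof -
    have "(2 / h) * (hi - v i j) = (hi - v i j) / h + (hi - v i j) / h"
      "(2 / h) * (lo - v i j) = (lo - v i j) / h + (lo - v i j) / h" by (simp_all add: field_simps)
    then show ?thesis using bx by' by linarith
  qed
  moreover have "(c * (1 - p) / h) * (2 / h) \<le> 1"
  proof -
    have "0 \<le> c * (1 - p)" using c False by simp
    moreover have "\<bar>p - 1\<bar> = 1 - p" using False by simp
    moreover have "c * (4 * \<bar>p - 1\<bar>) = 4 * (c * (1 - p))" using False by simp
    ultimately have "2 * (c * (1 - p)) \<le> h\<^sup>2" using cond by linarith
    then show ?thesis using h by (simp add: field_simps power2_eq_square)
  qed
  moreover have "0 \<le> c * (1 - p) / h" using False c h by simp
  ultimately show ?thesis unfolding eq using conv[of lo "v i j" hi "c * (1 - p) / h" "2/h" "X+Y"]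
    bndD[OF bv, of i j] h by auto
qed


lemma Dtimes_ok:
  assumes h: "h > 0" and bv: "bnd lo hi v" and c: "c \<ge> 0"
    and cond: "c * (2 * \<bar>p - 1\<bar>) \<le> h\<^sup>2"
  shows "lo \<le> v i j + c * Dtimes p h v i j \<and> v i j + c * Dtimes p h v i j \<le> hi"
proof (cases "p \<ge> 1")
  case True
  define S where "S = v (i+1) (j+1) + v (i-1) (j-1) + v (i+1) (j-1) + v (i-1) (j+1) - 4 * v i j"
  have eq: "c * Dtimes p h v i j = (c * (p - 1) / (2 * h\<^sup>2)) * S"
    using True by (simp add: Dtimes_def S_def)
  have "S \<le> 4 * (hi - v i j) \<and> 4 * (lo - v i j) \<le> S"
    using bndD[OF bv, of "i+1" "j+1"] bndD[OF bv, of "i-1" "j-1"] bndD[OF bv, of "i+1" "j-1"]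
      bndD[OF bv, of "i-1" "j+1"] unfolding S_def by auto
  moreover have "(c * (p - 1) / (2 * h\<^sup>2)) * 4 \<le> 1"
    using cond True h by (simp add: field_simps)
  moreover have "0 \<le> c * (p - 1) / (2 * h\<^sup>2)" using True c by simp
  ultimately show ?thesis unfolding eq using conv[of lo "v i j" hi "c * (p - 1) / (2 * h\<^sup>2)" 4 S]
    bndD[OF bv, of i j] by auto
next
  case False
  define H where "H = sqrt 2 * h"
  have H: "H > 0" using h by (simp add: H_def)
  define X where "X = minmod (dd h v i j) (dd h v (i-1) (j-1)) (dd h v (i-2) (j-2))
       - minmod (dd h v (i+1) (j+1)) (dd h v i j) (dd h v (i-1) (j-1))"
  define Y where "Y = minmod (de h v i j) (de h v (i-1) (j+1)) (de h v (i-2) (j+2))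
       - minmod (de h v (i+1) (j-1)) (de h v i j) (de h v (i-1) (j+1))"
  have eq: "c * Dtimes p h v i j = (c * (1 - p) / H) * (X + Y)"
    using False by (simp add: Dtimes_def X_def Y_def H_def field_simps)
  have bx: "X \<le> (hi - v i j) / H \<and> (lo - v i j) / H \<le> X"
    unfolding X_def by (rule X_bound[OF H bv, where a="i+1" and b="j+1" and a'="i-1" and b'="j-1"])
      (simp_all add: dd_def H_def)
  have by': "Y \<le> (hi - v i j) / H \<and> (lo - v i j) / H \<le> Y"
    unfolding Y_def by (rule X_bound[OF H bv, where a="i+1" and b="j-1" and a'="i-1" and b'="j+1"])
      (simp_all add: de_def H_def)
  have "X + Y \<le> (2 / H) * (hi - v i j) \<and> (2 / H) * (lo - v i j) \<le> X + Y"
  proof -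
    have "(2 / H) * (hi - v i j) = (hi - v i j) / H + (hi - v i j) / H"
      "(2 / H) * (lo - v i j) = (lo - v i j) / H + (lo - v i j) / H" by (simp_all add: field_simps)
    then show ?thesis using bx by' by linarith
  qed
  moreover have "(c * (1 - p) / H) * (2 / H) \<le> 1"
  proof -
    have "0 \<le> c * (1 - p)" using c False by simp
    moreover have "c * (2 * \<bar>p - 1\<bar>) = 2 * (c * (1 - p))" using False by simp
    ultimately have "c * (1 - p) \<le> h\<^sup>2" using cond by linarith
    moreover have "H * H = 2 * h\<^sup>2" by (simp add: H_def power2_eq_square)
    ultimately have "(c * (1 - p) / H) * (2 / H) = c * (1 - p) / h\<^sup>2" "c * (1 - p) / h\<^sup>2 \<le> 1"
      using H h by (simp_all add: field_simps)
    then show ?thesis by simp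
  qed
  moreover have "0 \<le> c * (1 - p) / H" using False c H by simp
  ultimately show ?thesis unfolding eq using conv[of lo "v i j" hi "c * (1 - p) / H" "2/H" "X+Y"]
    bndD[OF bv, of i j] H by auto
qed


lemma M_core:
  fixes x a G c B m lo hi :: real
  assumes "lo \<le> x" "x \<le> hi" "c \<ge> 0" "\<bar>a\<bar> \<le> B" "c * B * m \<le> 1" "m \<ge> 0"
    "a \<ge> 0 \<Longrightarrow> 0 \<le> G \<and> G \<le> m * (hi - x)"
    "a < 0 \<Longrightarrow> 0 \<le> G \<and> G \<le> m * (x - lo)"
  shows "lo \<le> x + c * a * G \<and> x + c * a * G \<le> hi"
proof (cases "a \<ge> 0")
  case True
  have "c * a * m \<le> c * B * m" using assms True by (intro mult_right_mono mult_left_mono) auto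
  then have "(c * a) * m \<le> 1" using assms by simp
  moreover have "m * (lo - x) \<le> G"
  proof -
    have "m * (lo - x) \<le> 0" using assms by (intro mult_nonneg_nonpos) auto
    then show ?thesis using assms True by linarith
  qed
  ultimately show ?thesis using conv[of lo x hi "c*a" m G] assms True by auto
next
  case False
  have "c * (-a) * m \<le> c * B * m" using assms False by (intro mult_right_mono mult_left_mono) auto
  then have f1: "(c * (-a)) * m \<le> 1" using assms by simp
  have f2: "-G \<le> m * (hi - x)"
  proof -
    have "0 \<le> m * (hi - x)" using assms by (intro mult_nonneg_nonneg) auto
    then show ?thesis using assms False by linarith
  qed
  have f3: "m * (lo - x) \<le> -G"
  proof -
    have "m * (lo - x) = - (m * (x - lo))" by (simp add: algebra_simps)
    then show ?thesis using assms False by linarith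
  qed
  have "lo \<le> x + (c * (-a)) * (-G) \<and> x + (c * (-a)) * (-G) \<le> hi"
    by (rule conv[OF assms(1,2) _ assms(6) f1 f2 f3]) (use assms False in \<open>simp add: mult_nonneg_nonpos\<close>)
  then show ?thesis by simp
qed

lemma max3_le: "u \<le> b \<Longrightarrow> w \<le> b \<Longrightarrow> 0 \<le> b \<Longrightarrow> max (max u w) 0 \<le> b \<and> 0 \<le> max (max u w) (0::real)"
  by simp

lemma Mplus_ok:
  assumes h: "h > 0" and bv: "bnd lo hi v" and c: "c \<ge> 0"
    and cond: "c * (2 * sqrt 2 * \<bar>2 - p\<bar>) \<le> h\<^sup>2"
  shows "lo \<le> v i j + c * Mplus p h v i j \<and> v i j + c * Mplus p h v i j \<le> hi"
proof -
  define a where "a = (2 - p) * curv h v i j"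
  define x where "x = v i j"
  have x: "lo \<le> x" "x \<le> hi" using bndD[OF bv, of i j] by (auto simp: x_def)
  have eq: "c * Mplus p h v i j = c * a * Gplus p h v i j" by (simp add: Mplus_def a_def)
  have ab: "\<bar>a\<bar> \<le> \<bar>2 - p\<bar> * (2 / h)" unfolding a_def abs_mult
    using curv_bound[OF h, of v i j] by (intro mult_left_mono) auto
  have cm: "c * (\<bar>2 - p\<bar> * (2 / h)) * (sqrt 2 / h) \<le> 1"
  proof -
    have "c * (\<bar>2 - p\<bar> * (2 / h)) * (sqrt 2 / h) = c * (2 * sqrt 2 * \<bar>2 - p\<bar>) / h\<^sup>2"
      by (simp add: field_simps power2_eq_square)
    also have "\<dots> \<le> 1" using cond h by simp
    finally show ?thesis .
  qed
  have d1: "(v a' b' - x) / h \<le> (hi - x) / h" for a' b'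
    using diff_le[OF h bv, of a' b' i j] by (simp add: x_def)
  have d2: "(x - v a' b') / h \<le> (x - lo) / h" for a' b'
    using diff_le'[OF h bv, of i j a' b'] by (simp add: x_def)
  have p1: "0 \<le> (hi - x) / h" "0 \<le> (x - lo) / h" using x h by auto
  have G1: "0 \<le> Gplus p h v i j \<and> Gplus p h v i j \<le> (sqrt 2 / h) * (hi - x)" if "a \<ge> 0"
  proof -
    have G: "Gplus p h v i j = sqrt ((max (max (- dx h v (i-1) j) (dx h v i j)) 0)\<^sup>2
        + (max (max (- dy h v i (j-1)) (dy h v i j)) 0)\<^sup>2)"
      using that by (simp add: Gplus_def a_def)
    have A: "max (max (- dx h v (i-1) j) (dx h v i j)) 0 \<le> (hi - x) / h \<and>
             0 \<le> max (max (- dx h v (i-1) j) (dx h v i j)) 0"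
      apply (rule max3_le)
      using d1[of "i-1" j] d1[of "i+1" j] p1 by (auto simp: dx_def x_def minus_divide_left)
    have B: "max (max (- dy h v i (j-1)) (dy h v i j)) 0 \<le> (hi - x) / h \<and>
             0 \<le> max (max (- dy h v i (j-1)) (dy h v i j)) 0"
      apply (rule max3_le)
      using d1[of i "j-1"] d1[of i "j+1"] p1 by (auto simp: dy_def x_def minus_divide_left)
    show ?thesis unfolding G using sqrt_bound[of _ "(hi - x) / h"] A B by auto
  qed
  have G2: "0 \<le> Gplus p h v i j \<and> Gplus p h v i j \<le> (sqrt 2 / h) * (x - lo)" if "a < 0"
  proof -
    have G: "Gplus p h v i j = sqrt ((max (max (- dx h v i j) (dx h v (i-1) j)) 0)\<^sup>2
        + (max (max (- dy h v i j) (dy h v i (j-1))) 0)\<^sup>2)"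
      using that by (simp add: Gplus_def a_def)
    have A: "max (max (- dx h v i j) (dx h v (i-1) j)) 0 \<le> (x - lo) / h \<and>
             0 \<le> max (max (- dx h v i j) (dx h v (i-1) j)) 0"
      apply (rule max3_le)
      using d2[of "i-1" j] d2[of "i+1" j] p1 by (auto simp: dx_def x_def minus_divide_left)
    have B: "max (max (- dy h v i j) (dy h v i (j-1))) 0 \<le> (x - lo) / h \<and>
             0 \<le> max (max (- dy h v i j) (dy h v i (j-1))) 0"
      apply (rule max3_le)
      using d2[of i "j-1"] d2[of i "j+1"] p1 by (auto simp: dy_def x_def minus_divide_left)
    show ?thesis unfolding G using sqrt_bound[of _ "(x - lo) / h"] A B by auto
  qed
  have "lo \<le> x + c * a * Gplus p h v i j \<and> x + c * a * Gplus p h v i j \<le> hi"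
    by (rule M_core[OF x c ab cm]) (use h G1 G2 in auto)
  then show ?thesis unfolding eq x_def .
qed


lemma Mtimes_ok:
  assumes h: "h > 0" and bv: "bnd lo hi v" and c: "c \<ge> 0"
    and cond: "c * (2 * \<bar>2 - p\<bar>) \<le> h\<^sup>2"
  shows "lo \<le> v i j + c * Mtimes p h v i j \<and> v i j + c * Mtimes p h v i j \<le> hi"
proof -
  define a where "a = (2 - p) * curv h v i j"
  define x where "x = v i j"
  define H where "H = sqrt 2 * h"
  have H: "H > 0" using h by (simp add: H_def)
  have sH: "sqrt 2 * ((hi - x) / H) = (1 / h) * (hi - x)" "sqrt 2 * ((x - lo) / H) = (1 / h) * (x - lo)"
    using h by (simp_all add: H_def field_simps)
  have x: "lo \<le> x" "x \<le> hi" using bndD[OF bv, of i j] by (auto simp: x_def)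
  have eq: "c * Mtimes p h v i j = c * a * Gtimes p h v i j" by (simp add: Mtimes_def a_def)
  have ab: "\<bar>a\<bar> \<le> \<bar>2 - p\<bar> * (2 / h)" unfolding a_def abs_mult
    using curv_bound[OF h, of v i j] by (intro mult_left_mono) auto
  have cm: "c * (\<bar>2 - p\<bar> * (2 / h)) * (1 / h) \<le> 1"
  proof -
    have "c * (\<bar>2 - p\<bar> * (2 / h)) * (1 / h) = c * (2 * \<bar>2 - p\<bar>) / h\<^sup>2"
      by (simp add: field_simps power2_eq_square)
    also have "\<dots> \<le> 1" using cond h by simp
    finally show ?thesis .
  qed
  have d1: "(v a' b' - x) / H \<le> (hi - x) / H" for a' b'
    using diff_le[OF H bv, of a' b' i j] by (simp add: x_def)
  have d2: "(x - v a' b') / H \<le> (x - lo) / H" for a' b'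
    using diff_le'[OF H bv, of i j a' b'] by (simp add: x_def)
  have p1: "0 \<le> (hi - x) / H" "0 \<le> (x - lo) / H" using x H by auto
  have G1: "0 \<le> Gtimes p h v i j \<and> Gtimes p h v i j \<le> (1 / h) * (hi - x)" if "a \<ge> 0"
  proof -
    have G: "Gtimes p h v i j = sqrt ((max (max (- dd h v (i-1) (j-1)) (dd h v i j)) 0)\<^sup>2
        + (max (max (- de h v (i-1) (j+1)) (de h v i j)) 0)\<^sup>2)"
      using that by (simp add: Gtimes_def a_def)
    have A: "max (max (- dd h v (i-1) (j-1)) (dd h v i j)) 0 \<le> (hi - x) / H \<and>
             0 \<le> max (max (- dd h v (i-1) (j-1)) (dd h v i j)) 0"
      apply (rule max3_le)
      using d1[of "i-1" "j-1"] d1[of "i+1" "j+1"] p1 by (auto simp: dd_def x_def minus_divide_left H_def)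
    have B: "max (max (- de h v (i-1) (j+1)) (de h v i j)) 0 \<le> (hi - x) / H \<and>
             0 \<le> max (max (- de h v (i-1) (j+1)) (de h v i j)) 0"
      apply (rule max3_le)
      using d1[of "i-1" "j+1"] d1[of "i+1" "j-1"] p1 by (auto simp: de_def x_def minus_divide_left H_def)
    show ?thesis unfolding G sH(1)[symmetric] using sqrt_bound[of _ "(hi - x) / H"] A B by auto
  qed
  have G2: "0 \<le> Gtimes p h v i j \<and> Gtimes p h v i j \<le> (1 / h) * (x - lo)" if "a < 0"
  proof -
    have G: "Gtimes p h v i j = sqrt ((max (max (- dd h v i j) (dd h v (i-1) (j-1))) 0)\<^sup>2
        + (max (max (- de h v i j) (de h v (i-1) (j+1))) 0)\<^sup>2)"
      using that by (simp add: Gtimes_def a_def)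
    have A: "max (max (- dd h v i j) (dd h v (i-1) (j-1))) 0 \<le> (x - lo) / H \<and>
             0 \<le> max (max (- dd h v i j) (dd h v (i-1) (j-1))) 0"
      apply (rule max3_le)
      using d2[of "i-1" "j-1"] d2[of "i+1" "j+1"] p1 by (auto simp: dd_def x_def minus_divide_left H_def)
    have B: "max (max (- de h v i j) (de h v (i-1) (j+1))) 0 \<le> (x - lo) / H \<and>
             0 \<le> max (max (- de h v i j) (de h v (i-1) (j+1))) 0"
      apply (rule max3_le)
      using d2[of "i-1" "j+1"] d2[of "i+1" "j-1"] p1 by (auto simp: de_def x_def minus_divide_left H_def)
    show ?thesis unfolding G sH(2)[symmetric] using sqrt_bound[of _ "(x - lo) / H"] A B by auto
  qed
  have "lo \<le> x + c * a * Gtimes p h v i j \<and> x + c * a * Gtimes p h v i j \<le> hi"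
    by (rule M_core[OF x c ab cm]) (use h G1 G2 in auto)
  then show ?thesis unfolding eq x_def .
qed


definition gb :: "nat \<Rightarrow> nat \<Rightarrow> real \<Rightarrow> real \<Rightarrow> (int \<Rightarrow> int \<Rightarrow> real) \<Rightarrow> bool" where
  "gb Nx Ny lo hi u = (\<forall>i j. (i, j) \<in> grid Nx Ny \<longrightarrow> lo \<le> u i j \<and> u i j \<le> hi)"

lemma refl_idx_range: "N \<ge> 1 \<Longrightarrow> 0 \<le> refl_idx N i \<and> refl_idx N i < int N"
  unfolding refl_idx_def Let_def
  using pos_mod_sign[of "2 * int N" i] pos_mod_bound[of "2 * int N" i] by auto

lemma ext_bnd: "Nx \<ge> 1 \<Longrightarrow> Ny \<ge> 1 \<Longrightarrow> gb Nx Ny lo hi u \<Longrightarrow> bnd lo hi (ext Nx Ny u)"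
  unfolding bnd_def ext_def gb_def grid_def
  using refl_idx_range[of Nx] refl_idx_range[of Ny] by auto

lemma substep_ok:
  assumes "Nx \<ge> 1" "Ny \<ge> 1" "gb Nx Ny lo hi u"
    and "\<And>v i j. bnd lo hi v \<Longrightarrow> lo \<le> v i j + c * Op v i j \<and> v i j + c * Op v i j \<le> hi"
  shows "gb Nx Ny lo hi (substep Nx Ny Op c u)"
  using assms(4)[OF ext_bnd[OF assms(1-3)]] unfolding gb_def substep_def by auto

lemma divle: "(d::real) > 0 \<Longrightarrow> t \<le> a / d \<Longrightarrow> t * d \<le> a"
  by (simp add: pos_le_divide_eq)

lemma step_ok:
  assumes N: "Nx \<ge> 1" "Ny \<ge> 1"
    and h: "h > 0" and nu: "0 < \<nu>" "\<nu> < 1" and tau: "\<tau> > 0"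
    and t1: "p \<noteq> 1 \<Longrightarrow> \<tau> \<le> h\<^sup>2 / (4 * (1 - \<nu>) * \<bar>p - 1\<bar>)"
    and t2: "p \<noteq> 1 \<Longrightarrow> \<tau> \<le> h\<^sup>2 / (2 * \<nu> * \<bar>p - 1\<bar>)"
    and t3: "p \<noteq> 2 \<Longrightarrow> \<tau> \<le> h\<^sup>2 / (2 * sqrt 2 * (1 - \<nu>) * \<bar>2 - p\<bar>)"
    and t4: "p \<noteq> 2 \<Longrightarrow> \<tau> \<le> h\<^sup>2 / (2 * \<nu> * \<bar>2 - p\<bar>)"
    and u: "gb Nx Ny lo hi u"
  shows "gb Nx Ny lo hi (scheme_step Nx Ny h p \<nu> \<tau> u)"
proof -
  have c1: "\<tau> * (1 - \<nu>) * (4 * \<bar>p - 1\<bar>) \<le> h\<^sup>2"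
  proof (cases "p = 1")
    case False
    then have "\<tau> * (4 * (1 - \<nu>) * \<bar>p - 1\<bar>) \<le> h\<^sup>2" using nu by (intro divle t1) auto
    then show ?thesis by (simp add: algebra_simps)
  qed simp
  have c2: "\<tau> * \<nu> * (2 * \<bar>p - 1\<bar>) \<le> h\<^sup>2"
  proof (cases "p = 1")
    case False
    then have "\<tau> * (2 * \<nu> * \<bar>p - 1\<bar>) \<le> h\<^sup>2" using nu by (intro divle t2) auto
    then show ?thesis by (simp add: algebra_simps)
  qed simp
  have c3: "\<tau> * (1 - \<nu>) * (2 * sqrt 2 * \<bar>2 - p\<bar>) \<le> h\<^sup>2"
  proof (cases "p = 2")
    case False
    then have "\<tau> * (2 * sqrt 2 * (1 - \<nu>) * \<bar>2 - p\<bar>) \<le> h\<^sup>2" using nu by (intro divle t3) auto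
    then show ?thesis by (simp add: algebra_simps)
  qed simp
  have c4: "\<tau> * \<nu> * (2 * \<bar>2 - p\<bar>) \<le> h\<^sup>2"
  proof (cases "p = 2")
    case False
    then have "\<tau> * (2 * \<nu> * \<bar>2 - p\<bar>) \<le> h\<^sup>2" using nu by (intro divle t4) auto
    then show ?thesis by (simp add: algebra_simps)
  qed simp
  have nn: "\<tau> * (1 - \<nu>) \<ge> 0" "\<tau> * \<nu> \<ge> 0" using nu tau by auto
  show ?thesis unfolding scheme_step_def
    apply (rule substep_ok[OF N])
     apply (rule substep_ok[OF N])
      apply (rule substep_ok[OF N])
       apply (rule substep_ok[OF N u])
       apply (rule Dplus_ok[OF h _ nn(1) c1], assumption)
      apply (rule Dtimes_ok[OF h _ nn(2) c2], assumption)
     apply (rule Mplus_ok[OF h _ nn(1) c3], assumption)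
    apply (rule Mtimes_ok[OF h _ nn(2) c4], assumption)
    done
qed


lemma supnorm_ge: "finite (grid Nx Ny) \<Longrightarrow> (i, j) \<in> grid Nx Ny \<Longrightarrow> \<bar>u i j\<bar> \<le> supnorm Nx Ny u"
  unfolding supnorm_def by (rule Max_ge) force+

theorem proposition7:
  fixes Nx Ny :: nat and h p \<nu> \<tau> :: real and f :: "int \<Rightarrow> int \<Rightarrow> real"
  assumes "Nx \<ge> 1" and "Ny \<ge> 1"
    and "h > 0" and "0 < \<nu>" and "\<nu> < 1" and "\<tau> > 0"
    and "p \<noteq> 1 \<Longrightarrow> \<tau> \<le> h\<^sup>2 / (4 * (1 - \<nu>) * \<bar>p - 1\<bar>)"
    and "p \<noteq> 1 \<Longrightarrow> \<tau> \<le> h\<^sup>2 / (2 * \<nu> * \<bar>p - 1\<bar>)"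
    and "p \<noteq> 2 \<Longrightarrow> \<tau> \<le> h\<^sup>2 / (2 * sqrt 2 * (1 - \<nu>) * \<bar>2 - p\<bar>)"
    and "p \<noteq> 2 \<Longrightarrow> \<tau> \<le> h\<^sup>2 / (2 * \<nu> * \<bar>2 - p\<bar>)"
  shows "\<forall>k\<ge>1. supnorm Nx Ny (scheme Nx Ny h p \<nu> \<tau> f k)
                  \<le> supnorm Nx Ny (scheme Nx Ny h p \<nu> \<tau> f (k - 1))
       \<and> (\<forall>k\<ge>1. \<forall>(n, m) \<in> grid Nx Ny.
           Min ((\<lambda>(i, j). f i j) ` grid Nx Ny) \<le> scheme Nx Ny h p \<nu> \<tau> f k n m
         \<and> scheme Nx Ny h p \<nu> \<tau> f k n m \<le> Max ((\<lambda>(i, j). f i j) ` grid Nx Ny))"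
proof -
  have fin: "finite (grid Nx Ny)" by (simp add: grid_def)
  have ne: "(0, 0) \<in> grid Nx Ny" using assms(1,2) by (simp add: grid_def)
  have gbU: "gb Nx Ny (Min ((\<lambda>(i, j). u i j) ` grid Nx Ny)) (Max ((\<lambda>(i, j). u i j) ` grid Nx Ny)) u"
    for u unfolding gb_def using fin by (auto intro!: Min_le Max_ge)
  have stp: "gb Nx Ny lo hi u \<Longrightarrow> gb Nx Ny lo hi (scheme_step Nx Ny h p \<nu> \<tau> u)" for lo hi u
    by (rule step_ok[OF assms])
  have suc: "scheme Nx Ny h p \<nu> \<tau> f (Suc k) = scheme_step Nx Ny h p \<nu> \<tau> (scheme Nx Ny h p \<nu> \<tau> f k)"
    for k by (simp add: scheme_def)
  have all: "gb Nx Ny (Min ((\<lambda>(i, j). f i j) ` grid Nx Ny)) (Max ((\<lambda>(i, j). f i j) ` grid Nx Ny))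
      (scheme Nx Ny h p \<nu> \<tau> f k)" for k
  proof (induction k)
    case 0
    show ?case using gbU[of f] by (simp add: scheme_def)
  next
    case (Suc k)
    show ?case unfolding suc by (rule stp[OF Suc])
  qed
  have part1: "supnorm Nx Ny (scheme Nx Ny h p \<nu> \<tau> f k)
                  \<le> supnorm Nx Ny (scheme Nx Ny h p \<nu> \<tau> f (k - 1))" if k1: "k \<ge> 1" for k
  proof -
    obtain k' where k: "k = Suc k'" using k1 by (cases k) auto
    define u where "u = scheme Nx Ny h p \<nu> \<tau> f k'"
    define U where "U = (\<lambda>(i, j). u i j) ` grid Nx Ny"
    have Ufin: "finite U" "U \<noteq> {}" using fin ne by (auto simp: U_def)
    have g: "gb Nx Ny (Min U) (Max U) (scheme Nx Ny h p \<nu> \<tau> f k)"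
      unfolding k suc u_def[symmetric] U_def by (rule stp[OF gbU])
    obtain a where a: "a \<in> grid Nx Ny" "Min U = u (fst a) (snd a)"
      using Min_in[OF Ufin] unfolding U_def by auto
    obtain b where b: "b \<in> grid Nx Ny" "Max U = u (fst b) (snd b)"
      using Max_in[OF Ufin] unfolding U_def by auto
    have "\<bar>Min U\<bar> \<le> supnorm Nx Ny u" "\<bar>Max U\<bar> \<le> supnorm Nx Ny u"
      using supnorm_ge[OF fin, of "fst a" "snd a" u] supnorm_ge[OF fin, of "fst b" "snd b" u] a b by auto
    then have "\<bar>scheme Nx Ny h p \<nu> \<tau> f k i j\<bar> \<le> supnorm Nx Ny u" if "(i, j) \<in> grid Nx Ny" for i j
      using g that unfolding gb_def by fastforce
    then have "supnorm Nx Ny (scheme Nx Ny h p \<nu> \<tau> f k) \<le> supnorm Nx Ny u"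
      unfolding supnorm_def using fin ne by (subst Max_le_iff) auto
    then show ?thesis by (simp add: k u_def)
  qed
  show ?thesis using part1 all unfolding gb_def by auto
qed

end
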